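(* $D(19,\{3,4\})\le 35$; equivalently, there exists a $\{K_3,K_4\}$-decomposition of $K_{19}$ with $\alpha\le 13$ (indeed one with $13$ copies of $K_3$ and $22$ copies of $K_4$).
   Context: A $\{K_3,K_4\}$-decomposition of $K_v$ is a collection of subgraphs, each isomorphic to $K_3$ or $K_4$, such that every edge of $K_v$ lies in exactly one of them. $\alpha$ and $\beta$ denote the numbers of copies of $K_3$ and $K_4$ in the decomposition (so $3\alpha+6\beta=\binom{v}{2}$). $D(v,\{3,4\})$ is the minimum of $\alpha+\beta$ over all such decompositions of $K_v$. *)

theory Defs
  imports Main
begin

text \<open>K_v has vertex set {0..<v}; a copy of K_3 / K_4 in K_v is determined by its
vertex set, a 3- or 4-subset of {0..<v}.\<close>

definition K34_decomp :: "nat \<Rightarrow> nat set set \<Rightarrow> bool" where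
  "K34_decomp v B \<longleftrightarrow>
     (\<forall>b\<in>B. b \<subseteq> {..<v} \<and> (card b = 3 \<or> card b = 4)) \<and>
     (\<forall>x<v. \<forall>y<v. x \<noteq> y \<longrightarrow> (\<exists>!b. b \<in> B \<and> {x, y} \<subseteq> b))"

definition num_K3 :: "nat set set \<Rightarrow> nat" where
  "num_K3 B = card {b \<in> B. card b = 3}"

definition num_K4 :: "nat set set \<Rightarrow> nat" where
  "num_K4 B = card {b \<in> B. card b = 4}"

definition D34 :: "nat \<Rightarrow> nat" where
  "D34 v = (LEAST n. \<exists>B. K34_decomp v B \<and> n = num_K3 B + num_K4 B)"

end

theory Submission
  imports Defs
begin

definition LL :: "nat list list" where
  "LL = [[0,4,6,13], [1,5,6,17], [6,9,12,16], [6,8,10,11], [2,6,14,15], [3,6,7,18],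
   [4,12,15,18], [0,5,8,15], [10,15,16,17], [1,3,11,15], [7,9,13,15], [2,5,9,11],
   [11,12,13,14], [4,7,11,17], [0,11,16,18], [8,13,16], [1,10,13], [3,5,13],
   [2,13,17,18], [5,10,14,18], [1,8,9,18], [5,7,12], [4,5,16], [1,2,7,16], [3,14,16],
   [7,8,14], [0,7,10], [1,4,14], [0,1,12], [0,9,14,17], [0,2,3], [3,8,12,17],
   [2,10,12], [2,4,8], [3,4,9,10]]"

definition BB :: "nat set set" where "BB = set ` set LL"

lemma LL_wf: "\<forall>l\<in>set LL. sorted_wrt (<) l \<and> (\<forall>x\<in>set l. x < 19) \<and> (length l = 3 \<or> length l = 4)"
  unfolding LL_def by simp

lemma LL_distinct: "distinct LL"
  unfolding LL_def by simp

lemma LL_len3: "length (filter (\<lambda>l. length l = 3) LL) = 13"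
  unfolding LL_def by simp

lemma LL_len4: "length (filter (\<lambda>l. length l = 4) LL) = 22"
  unfolding LL_def by simp

lemma LL_cover: "\<forall>x\<in>set [0..<19]. \<forall>y\<in>set [0..<19]. x \<noteq> y \<longrightarrow>
   length (filter (\<lambda>l. x \<in> set l \<and> y \<in> set l) LL) = 1"
  unfolding LL_def by code_simp

lemma card_set_LL: "l \<in> set LL \<Longrightarrow> card (set l) = length l"
  using LL_wf by (simp add: strict_sorted_iff distinct_card)

lemma inj_LL: "inj_on set (set LL)"
  using LL_wf by (metis inj_onI strict_sorted_equal)

lemma count_len: "card {b \<in> BB. card b = k} = length (filter (\<lambda>l. length l = k) LL)"
proof -
  have "{b \<in> BB. card b = k} = set ` set (filter (\<lambda>l. length l = k) LL)"
    unfolding BB_def using card_set_LL by auto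
  moreover have "inj_on set (set (filter (\<lambda>l. length l = k) LL))"
    using inj_LL by (rule inj_on_subset) auto
  ultimately have "card {b \<in> BB. card b = k} = card (set (filter (\<lambda>l. length l = k) LL))"
    by (simp add: card_image)
  also have "\<dots> = length (filter (\<lambda>l. length l = k) LL)"
    by (rule distinct_card) (simp add: LL_distinct)
  finally show ?thesis .
qed

lemma ex1_from_filter:
  assumes "length (filter (\<lambda>l. x \<in> set l \<and> y \<in> set l) LL) = 1"
  shows "\<exists>!b. b \<in> BB \<and> {x, y} \<subseteq> b"
proof -
  obtain l0 where f: "filter (\<lambda>l. x \<in> set l \<and> y \<in> set l) LL = [l0]"
    using assms by (metis length_0_conv length_Suc_conv One_nat_def)
  have "l0 \<in> set (filter (\<lambda>l. x \<in> set l \<and> y \<in> set l) LL)" using f by simp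
  then have l0: "l0 \<in> set LL" "x \<in> set l0" "y \<in> set l0" by auto
  show ?thesis
  proof (rule ex1I[of _ "set l0"])
    show "set l0 \<in> BB \<and> {x, y} \<subseteq> set l0" using l0 unfolding BB_def by auto
  next
    fix b assume "b \<in> BB \<and> {x, y} \<subseteq> b"
    then obtain l where "l \<in> set LL" "b = set l" "x \<in> set l" "y \<in> set l"
      unfolding BB_def by auto
    then have "l \<in> set (filter (\<lambda>l. x \<in> set l \<and> y \<in> set l) LL)" by simp
    then show "b = set l0" using f \<open>b = set l\<close> by simp
  qed
qed

lemma BB_decomp: "K34_decomp 19 BB"
  unfolding K34_decomp_def
proof (intro conjI allI impI ballI)
  fix b assume "b \<in> BB"
  then obtain l where l: "l \<in> set LL" "b = set l" unfolding BB_def by auto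
  then show "b \<subseteq> {..<19}" using LL_wf by auto
  show "card b = 3 \<or> card b = 4" using l LL_wf card_set_LL by auto
next
  fix x y :: nat assume "x < 19" "y < 19" "x \<noteq> y"
  then show "\<exists>!b. b \<in> BB \<and> {x, y} \<subseteq> b"
    using LL_cover by (intro ex1_from_filter) auto
qed

theorem mainTheorem18:
  shows "D34 19 \<le> 35 \<and> (\<exists>B. K34_decomp 19 B \<and> num_K3 B = 13 \<and> num_K4 B = 22)"
proof -
  have n3: "num_K3 BB = 13" unfolding num_K3_def using count_len LL_len3 by simp
  have n4: "num_K4 BB = 22" unfolding num_K4_def using count_len LL_len4 by simp
  have "D34 19 \<le> 35" unfolding D34_def
    by (rule Least_le) (use BB_decomp n3 n4 in auto)
  then show ?thesis using BB_decomp n3 n4 by blast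
qed

end
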